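(* Let $\xi$ be the random potential defined in the context. There is a constant $c_0>0$ such that $\mathbb{P}$-a.s. there exists a (random) increasing sequence $(x_n)_{n\in\mathbb{N}}$ of reals tending to infinity such that for all $n$ $$\xi(x)=\mathsf{ei}\ \ \forall x\in[x_n-2c_0\ln n,\,x_n],\qquad \xi(x)=\mathsf{es}\ \ \forall x\in[x_n+2,\,x_n+2c_0\ln n-2],$$ and $\xi$ is non-decreasing on $[x_n-2c_0\ln n,\,x_n+2c_0\ln n-2]$. Moreover, $\mathbb{P}$-a.s., $$1\le\liminf_{n\to\infty}\frac{x_n}{n}\le\limsup_{n\to\infty}\frac{x_n}{n}\le2.$$
   Context: Fix constants $0<\mathsf{ei}<\mathsf{es}<\infty$ with $\mathsf{es}/\mathsf{ei}>2$. Let $\chi:[0,\infty)\to[0,1]$ be continuous and non-increasing with $\chi(x)=1$ for $x\le1$ and $\chi(x)=0$ for $x\ge2$, and let $\omega=(\omega^i)_{i\in\mathbb{Z}}$ be a Poisson point process on $\mathbb{R}$ with intensity $1$ on $(\Omega,\mathcal F,\mathbb P)$. Define $\xi(x):=\mathsf{ei}+(\mathsf{es}-\mathsf{ei})\sup\{\chi(|x-\omega^i|):i\in\mathbb{Z}\}$, $x\in\mathbb{R}$. *)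

theory Defs
  imports "HOL-Probability.Probability"
begin

text \<open>A Poisson point process on the real line with intensity 1 (Lebesgue measure),
  on a probability space M, represented by its random set of points N \<omega> \<subseteq> \<real>.\<close>

definition poisson_point_process :: "'a measure \<Rightarrow> ('a \<Rightarrow> real set) \<Rightarrow> bool" where
  "poisson_point_process M N \<longleftrightarrow>
     prob_space M \<and>
     (\<forall>\<omega>\<in>space M. \<forall>a b. finite (N \<omega> \<inter> {a..b})) \<and>
     (\<forall>A. A \<in> sets lborel \<and> bounded A \<longrightarrow>
        (\<lambda>\<omega>. card (N \<omega> \<inter> A)) \<in> measurable M (count_space UNIV) \<and>
        (\<forall>k::nat. measure M {\<omega>\<in>space M. card (N \<omega> \<inter> A) = k}
                  = (measure lborel A) ^ k / fact k * exp (- measure lborel A))) \<and>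
     (\<forall>(I::nat set) (A::nat \<Rightarrow> real set). finite I \<longrightarrow>
        (\<forall>i\<in>I. A i \<in> sets lborel \<and> bounded (A i)) \<longrightarrow>
        disjoint_family_on A I \<longrightarrow>
        prob_space.indep_vars M (\<lambda>_. count_space UNIV) (\<lambda>i \<omega>. card (N \<omega> \<inter> A i)) I)"

definition potential :: "real \<Rightarrow> real \<Rightarrow> (real \<Rightarrow> real) \<Rightarrow> real set \<Rightarrow> real \<Rightarrow> real" where
  "potential ei es chi P x = ei + (es - ei) * Sup ((\<lambda>p. chi \<bar>x - p\<bar>) ` P)"

end

theory Submission
  imports Defs "HOL-Real_Asymp.Real_Asymp" "HOL-Library.Discrete_Functions"
begin


locale chi_ctx =
  fixes ei es :: real and chi :: "real \<Rightarrow> real"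
  assumes ei_es: "ei < es"
    and chi_range: "\<And>x. 0 \<le> x \<Longrightarrow> chi x \<in> {0..1}"
    and chi_antimono: "\<And>x y. 0 \<le> x \<Longrightarrow> x \<le> y \<Longrightarrow> chi y \<le> chi x"
    and chi_one: "\<And>x. 0 \<le> x \<Longrightarrow> x \<le> 1 \<Longrightarrow> chi x = 1"
    and chi_zero: "\<And>x. 2 \<le> x \<Longrightarrow> chi x = 0"
begin

lemma bdd: "bdd_above ((\<lambda>q. chi \<bar>z - q\<bar>) ` P)"
proof (rule bdd_aboveI[of _ 1])
  fix y assume "y \<in> (\<lambda>q. chi \<bar>z - q\<bar>) ` P"
  then obtain q where "y = chi \<bar>z - q\<bar>" by blast
  then show "y \<le> 1" using chi_range[of "\<bar>z - q\<bar>"] by simp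
qed

lemma pot_ei:
  assumes "P \<noteq> {}" "\<And>q. q \<in> P \<Longrightarrow> 2 \<le> \<bar>z - q\<bar>"
  shows "potential ei es chi P z = ei"
proof -
  have "(\<lambda>q. chi \<bar>z - q\<bar>) ` P = {0}" using assms chi_zero by auto
  then show ?thesis unfolding potential_def by simp
qed

lemma pot_es:
  assumes "q \<in> P" "\<bar>z - q\<bar> \<le> 1"
  shows "potential ei es chi P z = es"
proof -
  have "Sup ((\<lambda>q. chi \<bar>z - q\<bar>) ` P) = 1"
  proof (rule cSup_eq_maximum)
    have "chi \<bar>z - q\<bar> = 1" using assms chi_one by simp
    then show "1 \<in> (\<lambda>q. chi \<bar>z - q\<bar>) ` P" using assms(1) by force
    show "x \<le> 1" if "x \<in> (\<lambda>q. chi \<bar>z - q\<bar>) ` P" for x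
      using that chi_range by fastforce
  qed
  then show ?thesis unfolding potential_def by simp
qed

lemma pot_le_es:
  assumes "P \<noteq> {}"
  shows "potential ei es chi P z \<le> es"
proof -
  have "Sup ((\<lambda>q. chi \<bar>z - q\<bar>) ` P) \<le> 1"
  proof (rule cSup_least)
    show "(\<lambda>q. chi \<bar>z - q\<bar>) ` P \<noteq> {}" using assms by blast
    fix y assume "y \<in> (\<lambda>q. chi \<bar>z - q\<bar>) ` P"
    then obtain q where "y = chi \<bar>z - q\<bar>" by blast
    then show "y \<le> 1" using chi_range[of "\<bar>z - q\<bar>"] by simp
  qed
  then have "(es - ei) * Sup ((\<lambda>q. chi \<bar>z - q\<bar>) ` P) \<le> (es - ei) * 1"
    using ei_es by (intro mult_left_mono) simp_all
  then show ?thesis unfolding potential_def by simp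
qed

lemma pot_mono:
  assumes "P \<noteq> {}" "\<And>q. q \<in> P \<Longrightarrow> chi \<bar>z1 - q\<bar> \<le> chi \<bar>z2 - q\<bar>"
  shows "potential ei es chi P z1 \<le> potential ei es chi P z2"
proof -
  have "Sup ((\<lambda>q. chi \<bar>z1 - q\<bar>) ` P) \<le> Sup ((\<lambda>q. chi \<bar>z2 - q\<bar>) ` P)"
  proof (rule cSup_mono)
    show "(\<lambda>q. chi \<bar>z1 - q\<bar>) ` P \<noteq> {}" using assms by blast
    show "bdd_above ((\<lambda>q. chi \<bar>z2 - q\<bar>) ` P)" by (rule bdd)
    fix y assume "y \<in> (\<lambda>q. chi \<bar>z1 - q\<bar>) ` P"
    then obtain q where "q \<in> P" "y = chi \<bar>z1 - q\<bar>" by blast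
    then show "\<exists>a\<in>(\<lambda>q. chi \<bar>z2 - q\<bar>) ` P. y \<le> a" using assms(2) by blast
  qed
  then have "(es - ei) * Sup ((\<lambda>q. chi \<bar>z1 - q\<bar>) ` P) \<le> (es - ei) * Sup ((\<lambda>q. chi \<bar>z2 - q\<bar>) ` P)"
    using ei_es by (intro mult_left_mono) simp_all
  then show ?thesis unfolding potential_def by simp
qed

lemma det:
  fixes P :: "real set" and L :: nat and b x l :: real
  assumes fin: "finite (P \<inter> {b+L+5..b+L+6})"
    and L1: "1 \<le> L"
    and gap: "P \<inter> {b..<b+L+5} = {}"
    and units: "\<And>t. t \<in> {1..L} \<Longrightarrow> P \<inter> {b+L+4+t..<b+L+5+t} \<noteq> {}"
    and p_def: "p = Min (P \<inter> {b+L+5..<b+L+6})"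
    and x: "p - 3 \<le> x" "x \<le> p - 2"
    and l: "0 \<le> l" "l \<le> L"
  shows "(\<forall>z\<in>{x - l..x}. potential ei es chi P z = ei) \<and>
         (\<forall>z\<in>{x + 2..x + l - 2}. potential ei es chi P z = es) \<and>
         mono_on {x - l..x + l - 2} (potential ei es chi P)"
proof -
  have ne: "P \<inter> {b+L+5..<b+L+6} \<noteq> {}" using units[of 1] L1 by (simp add: algebra_simps)
  have fin': "finite (P \<inter> {b+L+5..<b+L+6})" by (rule finite_subset[OF _ fin]) auto
  have pin: "p \<in> P \<inter> {b+L+5..<b+L+6}" unfolding p_def by (rule Min_in[OF fin' ne])
  then have pP: "p \<in> P" and pb: "b+L+5 \<le> p" "p < b+L+6" by simp_all
  have Pne: "P \<noteq> {}" using pP by blast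
  have below: "q < b" if "q \<in> P" "q < p" for q
  proof (rule ccontr)
    assume "\<not> q < b"
    show False
    proof (cases "q < b+L+5")
      case True
      then have "q \<in> P \<inter> {b..<b+L+5}" using that \<open>\<not> q < b\<close> by simp
      then show False using gap by blast
    next
      case False
      then have "q \<in> P \<inter> {b+L+5..<b+L+6}" using that pb by simp
      then have "p \<le> q" unfolding p_def by (rule Min_le[OF fin'])
      then show False using that by simp
    qed
  qed
  have far: "2 \<le> \<bar>z - q\<bar>" if "q \<in> P" "p - 3 - L \<le> z" "z \<le> p - 2" for q z
  proof (cases "q < p")
    case True then have "q < b" using below that(1) by blast
    then have "2 \<le> z - q" using that pb by linarith
    then show ?thesis by (rule order_trans) (rule abs_ge_self)
  next
    case False then have "2 \<le> q - z" using that by linarith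
    then show ?thesis using abs_ge_minus_self[of "z - q"] by linarith
  qed
  have A: "potential ei es chi P z = ei" if "x - l \<le> z" "z \<le> x" for z
  proof (rule pot_ei[OF Pne])
    fix q assume q: "q \<in> P"
    show "2 \<le> \<bar>z - q\<bar>" by (rule far[OF q]) (use that x l in linarith)+
  qed
  have B: "potential ei es chi P z = es" if "x + 2 \<le> z" "z \<le> x + l - 2" for z
  proof (cases "z \<le> p")
    case True
    have "\<bar>z - p\<bar> \<le> 1" using True that x by (simp add: abs_le_iff)
    then show ?thesis by (rule pot_es[OF pP])
  next
    case False
    define f where "f = \<lfloor>z - b - L - 4\<rfloor>"
    have f1: "of_int f \<le> z - b - L - 4" "z - b - L - 4 < of_int f + 1"
      unfolding f_def by (rule of_int_floor_le) (rule real_of_int_floor_add_one_gt)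
    have "(0::real) < of_int f" using f1 False pb by linarith
    then have f0: "0 < f" by simp
    define t where "t = nat f"
    have tf: "real t = of_int f" unfolding t_def using f0 by simp
    have t1: "1 \<le> t" unfolding t_def using f0 by simp
    have "real t < L" using tf f1 that x l pb by linarith
    then have tL: "t \<le> L" by simp
    have tz: "b+L+4+t \<le> z" "z < b+L+5+t" using tf f1 by linarith+
    obtain q where q: "q \<in> P" "b+L+4+t \<le> q" "q < b+L+5+t" using units[of t] t1 tL by auto
    have "\<bar>z - q\<bar> \<le> 1" using q tz by (simp add: abs_le_iff)
    then show ?thesis by (rule pot_es[OF q(1)])
  qed
  have C: "mono_on {x - l..x + l - 2} (potential ei es chi P)"
  proof (rule mono_onI)
    fix z1 z2 assume z: "z1 \<in> {x - l..x + l - 2}" "z2 \<in> {x - l..x + l - 2}" "z1 \<le> z2"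
    show "potential ei es chi P z1 \<le> potential ei es chi P z2"
    proof (cases "x + 2 \<le> z2")
      case True
      have "potential ei es chi P z2 = es" using B[of z2] z True by simp
      then show ?thesis using pot_le_es[OF Pne, of z1] by simp
    next
      case False
      show ?thesis
      proof (rule pot_mono[OF Pne])
        fix q assume q: "q \<in> P"
        show "chi \<bar>z1 - q\<bar> \<le> chi \<bar>z2 - q\<bar>"
        proof (cases "q < p")
          case True
          have "2 \<le> \<bar>z1 - q\<bar>"
          proof -
            have "q < b" using below q True by blast
            then have "2 \<le> z1 - q" using z x l pb by simp
            then show ?thesis by (rule order_trans) (rule abs_ge_self)
          qed
          then have "chi \<bar>z1 - q\<bar> = 0" by (rule chi_zero)
          moreover have "0 \<le> chi \<bar>z2 - q\<bar>" using chi_range[of "\<bar>z2 - q\<bar>"] by simp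
          ultimately show ?thesis by simp
        next
          case False
          have e1: "\<bar>z1 - q\<bar> = q - z1" "\<bar>z2 - q\<bar> = q - z2"
            using False z \<open>\<not> x + 2 \<le> z2\<close> x by auto
          have "0 \<le> q - z2" using False \<open>\<not> x + 2 \<le> z2\<close> x by simp
          then show ?thesis unfolding e1 by (rule chi_antimono) (use z in simp)
        qed
      qed
    qed
  qed
  show ?thesis using A B C by auto
qed

end



definition lo :: "real \<Rightarrow> nat \<Rightarrow> nat \<Rightarrow> real" where
  "lo a L i = a + real (i div (L+1)) * (2*L+5) + (if i mod (L+1) = 0 then 0 else L + 4 + real (i mod (L+1)))"
definition hi :: "real \<Rightarrow> nat \<Rightarrow> nat \<Rightarrow> real" where
  "hi a L i = lo a L i + (if i mod (L+1) = 0 then L + 5 else 1)"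

lemma hi_lo_Suc: "hi a L i = lo a L (Suc i)"
proof (cases "Suc (i mod (L+1)) = L+1")
  case True
  have m: "i mod (L+1) = L" using True by simp
  have e: "Suc i = (L+1) * Suc (i div (L+1))"
    using m div_mult_mod_eq[of i "L+1"] by (simp add: algebra_simps)
  have m2: "Suc i mod (L+1) = 0" by (subst e) (rule mod_mult_self1_is_0)
  have d0: "(L+1) * Suc (i div (L+1)) div (L+1) = Suc (i div (L+1))"
    by (rule nonzero_mult_div_cancel_left) simp
  have d: "Suc i div (L+1) = Suc (i div (L+1))" using d0 e by metis
  show ?thesis unfolding hi_def lo_def by (simp add: m[simplified] m2[simplified] d[simplified] algebra_simps)
next
  case False
  have m2: "Suc i mod (L+1) = Suc (i mod (L+1))" by (subst mod_Suc) (use False in simp)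
  have d: "Suc i div (L+1) = i div (L+1)" using False by (simp add: div_Suc mod_Suc)
  have nz: "Suc i mod (L+1) \<noteq> 0" using m2 by simp
  have "hi a L i = a + real (i div (L+1)) * (2*L+5) + (if i mod (L+1) = 0 then L+5 else L + 5 + real (i mod (L+1)))"
    unfolding hi_def lo_def by simp
  also have "\<dots> = lo a L (Suc i)"
    unfolding lo_def using nz by (simp add: m2[simplified] d[simplified] algebra_simps)
  finally show ?thesis .
qed

lemma lo_less_hi: "lo a L i < hi a L i"
  unfolding hi_def by auto

lemma lo_strict_mono: "strict_mono (lo a L)"
  by (rule strict_monoI_Suc) (metis hi_lo_Suc lo_less_hi)

lemma hi_le_lo: "i < i' \<Longrightarrow> hi a L i \<le> lo a L i'"
  using lo_strict_mono[of a L] unfolding hi_lo_Suc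
  by (metis Suc_leI order_le_less strict_mono_less_eq)

lemma lo_block: "lo a L (j * (L+1)) = a + real j * (2*L+5)"
proof -
  have "j * (L+1) mod (L+1) = 0" by (metis mod_mult_self2_is_0)
  moreover have "j * (L+1) div (L+1) = j" by (metis add_is_0 nonzero_mult_div_cancel_right zero_neq_one)
  ultimately show ?thesis unfolding lo_def by simp
qed

lemma lo_block_t: "t \<le> L \<Longrightarrow> 1 \<le> t \<Longrightarrow> lo a L (j * (L+1) + t) = a + real j * (2*L+5) + L + 4 + t"
proof -
  assume a: "t \<le> L" "1 \<le> t"
  have "(j * (L+1) + t) mod (L+1) = t" using a by (metis Suc_eq_plus1 leD mod_less mod_mult_self3 not_less_eq)
  moreover have "(j * (L+1) + t) div (L+1) = j" using \<open>t \<le> L\<close> by (metis div_mult_self3 div_less less_Suc_eq_le Suc_eq_plus1 add_cancel_left_right add_eq_0_iff_both_eq_0 zero_neq_one)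
  ultimately show ?thesis unfolding lo_def using a by simp
qed


definition blk :: "real \<Rightarrow> nat \<Rightarrow> nat \<Rightarrow> real set" where
  "blk a L i = {lo a L i ..< hi a L i}"

lemma blk_disj: "i \<noteq> i' \<Longrightarrow> blk a L i \<inter> blk a L i' = {}"
  unfolding blk_def
  using hi_le_lo[of i i' a L] hi_le_lo[of i' i a L] by (cases "i < i'") auto

locale ppp_ctx = prob_space M for M :: "'a measure" +
  fixes N :: "'a \<Rightarrow> real set"
  assumes ppp: "poisson_point_process M N"
begin

lemma D: "prob_space M \<and> (\<forall>\<omega>\<in>space M. \<forall>a b. finite (N \<omega> \<inter> {a..b})) \<and>
     (\<forall>A. A \<in> sets lborel \<and> bounded A \<longrightarrow>
        (\<lambda>\<omega>. card (N \<omega> \<inter> A)) \<in> measurable M (count_space UNIV) \<and>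
        (\<forall>k::nat. measure M {\<omega>\<in>space M. card (N \<omega> \<inter> A) = k}
                  = (measure lborel A) ^ k / fact k * exp (- measure lborel A))) \<and>
     (\<forall>(I::nat set) (A::nat \<Rightarrow> real set). finite I \<longrightarrow>
        (\<forall>i\<in>I. A i \<in> sets lborel \<and> bounded (A i)) \<longrightarrow>
        disjoint_family_on A I \<longrightarrow>
        indep_vars (\<lambda>_. count_space UNIV) (\<lambda>i \<omega>. card (N \<omega> \<inter> A i)) I)"
  using ppp unfolding poisson_point_process_def .

lemma locfin: "\<omega> \<in> space M \<Longrightarrow> finite (N \<omega> \<inter> {a..b})"
  using conjunct1[OF conjunct2[OF D]] by blast

lemma CNT: "A \<in> sets lborel \<Longrightarrow> bounded A \<Longrightarrow> (\<lambda>\<omega>. card (N \<omega> \<inter> A)) \<in> measurable M (count_space UNIV) \<and>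
        (\<forall>k::nat. measure M {\<omega>\<in>space M. card (N \<omega> \<inter> A) = k}
                  = (measure lborel A) ^ k / fact k * exp (- measure lborel A))"
  using conjunct1[OF conjunct2[OF conjunct2[OF D]]] by blast

lemma cnt_meas: "(\<lambda>\<omega>. card (N \<omega> \<inter> {a..<b})) \<in> measurable M (count_space UNIV)"
  using CNT[of "{a..<b}"] by simp

lemma cnt_prob: "measure M {\<omega>\<in>space M. card (N \<omega> \<inter> {a..<b}) = k} = (measure lborel {a..<b}) ^ k / fact k * exp (- measure lborel {a..<b})"
  using CNT[of "{a..<b}"] by simp

lemma Ico_meas: "a \<le> b \<Longrightarrow> measure lborel {a..<b::real} = b - a"
  by (simp add: measure_def)

lemma prob0: "a \<le> b \<Longrightarrow> prob {\<omega>\<in>space M. card (N \<omega> \<inter> {a..<b}) = 0} = exp (-(b - a))"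
  using cnt_prob[of a b 0] Ico_meas by simp

lemma ev0_sets: "{\<omega>\<in>space M. card (N \<omega> \<inter> {a..<b}) = 0} \<in> events"
proof -
  have "{\<omega>\<in>space M. card (N \<omega> \<inter> {a..<b}) = 0} = (\<lambda>\<omega>. card (N \<omega> \<inter> {a..<b})) -` {0} \<inter> space M" by auto
  then show ?thesis using measurable_sets[OF cnt_meas, of "{0}"] by simp
qed

lemma prob1: "a \<le> b \<Longrightarrow> prob {\<omega>\<in>space M. card (N \<omega> \<inter> {a..<b}) \<noteq> 0} = 1 - exp (-(b - a))"
proof -
  assume ab: "a \<le> b"
  have "{\<omega>\<in>space M. card (N \<omega> \<inter> {a..<b}) \<noteq> 0} = space M - {\<omega>\<in>space M. card (N \<omega> \<inter> {a..<b}) = 0}" by auto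
  then show ?thesis using prob_compl[OF ev0_sets] prob0[OF ab] by simp
qed

lemma indep_blk: "indep_vars (\<lambda>_. count_space UNIV) (\<lambda>i \<omega>. card (N \<omega> \<inter> blk a L i)) {..<n}"
proof -
  have "\<forall>i\<in>{..<n}. blk a L i \<in> sets lborel \<and> bounded (blk a L i)" unfolding blk_def by auto
  moreover have "disjoint_family_on (blk a L) {..<n}"
    unfolding disjoint_family_on_def using blk_disj by auto
  ultimately show ?thesis using conjunct2[OF conjunct2[OF conjunct2[OF D]]] by blast
qed


definition ev :: "real \<Rightarrow> nat \<Rightarrow> nat \<Rightarrow> 'a set" where
  "ev a L i = (if i mod (L+1) = 0 then {\<omega>\<in>space M. card (N \<omega> \<inter> blk a L i) = 0}
               else {\<omega>\<in>space M. card (N \<omega> \<inter> blk a L i) \<noteq> 0})"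

definition site :: "real \<Rightarrow> nat \<Rightarrow> nat \<Rightarrow> 'a set" where
  "site a L j = (\<Inter>i\<in>{j*(L+1)..<(j+1)*(L+1)}. ev a L i)"

lemma ev_gen: "ev a L i \<in> {(\<lambda>\<omega>. card (N \<omega> \<inter> blk a L i)) -` B \<inter> space M | B. B \<in> sets (count_space UNIV)}"
proof (cases "i mod (L+1) = 0")
  case True
  then have "ev a L i = (\<lambda>\<omega>. card (N \<omega> \<inter> blk a L i)) -` {0} \<inter> space M" unfolding ev_def by auto
  then show ?thesis by (intro CollectI exI[where x="{0}"]) simp
next
  case False
  then have "ev a L i = (\<lambda>\<omega>. card (N \<omega> \<inter> blk a L i)) -` (-{0}) \<inter> space M" unfolding ev_def by auto
  then show ?thesis by (intro CollectI exI[where x="-{0}"]) simp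
qed

lemma ev_prob: "exp (-(hi a L i - lo a L i)) \<le> prob (ev a L i)"
proof (cases "i mod (L+1) = 0")
  case True
  then show ?thesis unfolding ev_def blk_def using prob0[of "lo a L i" "hi a L i"] lo_less_hi[of a L i] by simp
next
  case False
  have hl: "hi a L i - lo a L i = 1" unfolding hi_def using False by simp
  have "exp (-1::real) \<le> 1/2"
  proof -
    have "2 \<le> exp (1::real)" using exp_ge_add_one_self[of 1] by simp
    then show ?thesis by (simp add: exp_minus field_simps)
  qed
  then have "exp (-1::real) \<le> 1 - exp (-1)" by simp
  then show ?thesis unfolding ev_def blk_def using False prob1[of "lo a L i" "hi a L i"] lo_less_hi[of a L i] hl by simp
qed

lemma site_prob: "exp (-(2 * real L + 5)) \<le> prob (site a L j)"
proof -
  let ?I = "{j*(L+1)..<(j+1)*(L+1)}"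
  have ind: "indep_sets (\<lambda>i. {(\<lambda>\<omega>. card (N \<omega> \<inter> blk a L i)) -` B \<inter> space M | B. B \<in> sets (count_space UNIV)}) {..<(j+1)*(L+1)}"
    using indep_blk[of a L "(j+1)*(L+1)"] unfolding indep_vars_def2 by blast
  have "prob (site a L j) = (\<Prod>i\<in>?I. prob (ev a L i))"
    unfolding site_def
  proof (rule indep_setsD[OF ind])
    show "?I \<subseteq> {..<(j+1)*(L+1)}" by auto
    show "?I \<noteq> {}" by simp
    show "finite ?I" by simp
    show "\<forall>i\<in>?I. ev a L i \<in> {(\<lambda>\<omega>. card (N \<omega> \<inter> blk a L i)) -` B \<inter> space M | B. B \<in> sets (count_space UNIV)}"
      using ev_gen by blast
  qed
  also have "\<dots> \<ge> (\<Prod>i\<in>?I. exp (-(hi a L i - lo a L i)))"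
  proof (rule prod_mono)
    fix i show "0 \<le> exp (-(hi a L i - lo a L i)) \<and> exp (-(hi a L i - lo a L i)) \<le> prob (ev a L i)"
      using ev_prob[of a L i] by simp
  qed
  also have "(\<Prod>i\<in>?I. exp (-(hi a L i - lo a L i))) = exp (- (\<Sum>i\<in>?I. lo a L (Suc i) - lo a L i))"
    unfolding hi_lo_Suc sum_negf[symmetric] by (rule exp_sum[symmetric]) simp
  also have "(\<Sum>i\<in>?I. lo a L (Suc i) - lo a L i) = lo a L ((j+1)*(L+1)) - lo a L (j*(L+1))"
    by (rule sum_Suc_diff') simp
  also have "\<dots> = 2 * real L + 5" using lo_block[of a L "j+1"] lo_block[of a L j] by (simp add: algebra_simps)
  finally show ?thesis by simp
qed


lemma ev_events: "ev a L i \<in> events"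
proof (cases "i mod (L+1) = 0")
  case True
  then show ?thesis unfolding ev_def blk_def using ev0_sets[of "lo a L i" "hi a L i"] by simp
next
  case False
  have "ev a L i = space M - {\<omega>\<in>space M. card (N \<omega> \<inter> {lo a L i..<hi a L i}) = 0}"
    unfolding ev_def blk_def using False by auto
  then show ?thesis using sets.compl_sets[OF ev0_sets[of "lo a L i" "hi a L i"]] by simp
qed

lemma site_events: "site a L j \<in> events"
  unfolding site_def by (rule sets.finite_INT) (auto simp: ev_events)

lemma fail_prob: "prob (space M - (\<Union>j<J. site a L j)) \<le> exp (-(real J * exp (-(2*L+5))))"
proof (cases "J = 0")
  case True then show ?thesis by simp
next
  case False
  define p :: real where "p = exp (-(2 * real L + 5))"
  let ?X = "\<lambda>i \<omega>. card (N \<omega> \<inter> blk a L i)"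
  let ?E = "\<lambda>i. {?X i -` B \<inter> space M | B. B \<in> sets (count_space UNIV)}"
  let ?P = "\<lambda>j. {j*(L+1)..<(j+1)*(L+1)}"
  have ind: "indep_sets ?E {..<J*(L+1)}"
    using indep_blk[of a L "J*(L+1)"] unfolding indep_vars_def2 by blast
  have U: "{..<J*(L+1)} = (\<Union>j\<in>{..<J}. ?P j)"
  proof (intro equalityI subsetI)
    fix i assume i: "i \<in> {..<J*(L+1)}"
    have "i div (L+1) < J" using i by (simp add: less_mult_imp_div_less)
    moreover have "i \<in> ?P (i div (L+1))"
      using div_times_less_eq_dividend[of i "L+1"] dividend_less_times_div[of "L+1" i] 
      by (auto simp: algebra_simps)
    ultimately show "i \<in> (\<Union>j\<in>{..<J}. ?P j)" by blast
  next
    fix i assume "i \<in> (\<Union>j\<in>{..<J}. ?P j)"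
    then obtain j where j: "j < J" "i < (j+1)*(L+1)" by auto
    have "(j+1)*(L+1) \<le> J*(L+1)" using j(1) by (intro mult_right_mono) auto
    then show "i \<in> {..<J*(L+1)}" using j by auto
  qed
  have ind2: "indep_sets (\<lambda>j. sigma_sets (space M) (\<Union>i\<in>?P j. ?E i)) {..<J}"
  proof (rule indep_sets_collect_sigma)
    show "indep_sets ?E (\<Union>j\<in>{..<J}. ?P j)" using ind U by simp
    show "Int_stable (?E i)" for i
      unfolding Int_stable_def
    proof (intro allI impI ballI)
      fix x y assume "x \<in> ?E i" "y \<in> ?E i"
      then obtain B B' where "x = ?X i -` B \<inter> space M" "y = ?X i -` B' \<inter> space M" by auto
      then have "x \<inter> y = ?X i -` (B \<inter> B') \<inter> space M" by auto
      moreover have "B \<inter> B' \<in> sets (count_space UNIV)" by simp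
      ultimately show "x \<inter> y \<in> ?E i" by blast
    qed
    show "disjoint_family_on ?P {..<J}"
      unfolding disjoint_family_on_def
    proof (intro ballI impI)
      fix j j' assume "j \<in> {..<J}" "j' \<in> {..<J}" "j \<noteq> j'"
      then have "j < j' \<or> j' < j" by auto
      moreover have "(j+1)*(L+1) \<le> j'*(L+1)" if "j < j'" for j j' :: nat
        using that by (intro mult_right_mono) auto
      ultimately show "?P j \<inter> ?P j' = {}" by fastforce
    qed
  qed
  have sig: "space M - site a L j \<in> sigma_sets (space M) (\<Union>i\<in>?P j. ?E i)" for j
  proof -
    have sub: "(\<Union>i\<in>?P j. ?E i) \<subseteq> Pow (space M)" by auto
    interpret S: sigma_algebra "space M" "sigma_sets (space M) (\<Union>i\<in>?P j. ?E i)"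
      by (rule sigma_algebra_sigma_sets[OF sub])
    have "site a L j \<in> sigma_sets (space M) (\<Union>i\<in>?P j. ?E i)"
      unfolding site_def
    proof (rule S.finite_INT)
      show "?P j \<noteq> {}" by simp
      fix i assume "i \<in> ?P j"
      then show "ev a L i \<in> sigma_sets (space M) (\<Union>i\<in>?P j. ?E i)"
        using ev_gen[of a L i] by (intro sigma_sets.Basic) blast
    qed simp
    then show ?thesis by (rule S.compl_sets)
  qed
  have eq: "space M - (\<Union>j<J. site a L j) = (\<Inter>j\<in>{..<J}. space M - site a L j)"
    using False by auto
  have "prob (\<Inter>j\<in>{..<J}. space M - site a L j) = (\<Prod>j\<in>{..<J}. prob (space M - site a L j))"
    by (rule indep_setsD[OF ind2]) (use False sig in auto)
  then have "prob (space M - (\<Union>j<J. site a L j)) = (\<Prod>j\<in>{..<J}. prob (space M - site a L j))"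
    unfolding eq .
  also have "\<dots> \<le> (\<Prod>j\<in>{..<J}. exp (-p))"
  proof (rule prod_mono)
    fix j
    have "prob (space M - site a L j) = 1 - prob (site a L j)" by (rule prob_compl[OF site_events])
    moreover have "p \<le> prob (site a L j)" unfolding p_def using site_prob by simp
    moreover have "1 + (-p) \<le> exp (-p)" by (rule exp_ge_add_one_self)
    ultimately show "0 \<le> prob (space M - site a L j) \<and> prob (space M - site a L j) \<le> exp (-p)"
      by simp
  qed
  also have "\<dots> = exp (-(real J * p))" by (simp add: exp_of_nat_mult[symmetric])
  finally show ?thesis unfolding p_def .
qed

end



definition Lw :: "nat \<Rightarrow> nat" where "Lw k = nat \<lceil>ln (real k + 1) / 4\<rceil> + 1"
definition Jw :: "nat \<Rightarrow> nat" where "Jw k = nat \<lfloor>real k / (2 * Lw k + 5)\<rfloor>"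
definition aw :: "nat \<Rightarrow> real" where "aw k = 3 * (real k)^2 / 2"

lemma Lw_ge: "ln (real k + 1) / 4 + 1 \<le> Lw k"
proof -
  have "0 \<le> ln (real k + 1)" by simp
  then show ?thesis unfolding Lw_def by linarith
qed

lemma Lw_le: "Lw k \<le> ln (real k + 1) / 4 + 2"
proof -
  have "0 \<le> ln (real k + 1)" by simp
  then show ?thesis unfolding Lw_def by linarith
qed

lemma Jw_eq: "real (Jw k) = of_int \<lfloor>real k / (2 * Lw k + 5)\<rfloor>"
proof -
  have "0 \<le> real k / (2 * Lw k + 5)" by simp
  then have "0 \<le> \<lfloor>real k / (2 * Lw k + 5)\<rfloor>" by simp
  then show ?thesis unfolding Jw_def by simp
qed

lemma Jw_le: "real (Jw k) * (2 * Lw k + 5) \<le> real k"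
proof -
  have pos: "(0::real) < 2 * Lw k + 5" by simp
  have "real (Jw k) \<le> real k / (2 * Lw k + 5)" unfolding Jw_eq by (rule of_int_floor_le)
  then show ?thesis using pos by (simp add: field_simps)
qed

lemma Jw_ge: "real k / (2 * Lw k + 5) - 1 \<le> real (Jw k)"
  unfolding Jw_eq using real_of_int_floor_add_one_gt[of "real k / (2 * Lw k + 5)"] by linarith

lemma asy1: "eventually (\<lambda>k::nat. 0 \<le> real k/(ln(real k+1)/2+9) - 1) sequentially"
  by real_asymp

lemma asy2: "eventually (\<lambda>k::nat. 2 * ln (real k) \<le> (real k/(ln(real k+1)/2+9) - 1) * exp (-(ln(real k+1)/2+9))) sequentially"
  by real_asymp

lemma key_bound: "eventually (\<lambda>k::nat. exp (-(real (Jw k) * exp (-(2 * real (Lw k) + 5)))) \<le> inverse (real k ^ 2)) sequentially"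
proof -
  have "eventually (\<lambda>k::nat. 0 < k) sequentially" by (rule eventually_gt_at_top)
  then show ?thesis using asy1 asy2
  proof eventually_elim
    case (elim k)
    define D where "D = 2 * real (Lw k) + 5"
    define D' where "D' = ln(real k+1)/2+9"
    have DD: "D \<le> D'" "0 < D" unfolding D_def D'_def using Lw_le[of k] by auto
    have "real k / D' \<le> real k / D" using DD by (intro divide_left_mono) auto
    then have h1: "0 \<le> real k / D - 1" "real k / D' - 1 \<le> real k / D - 1" using elim(2) unfolding D'_def by auto
    have h2: "exp (-D') \<le> exp (-D)" using DD by simp
    have "2 * ln (real k) \<le> (real k / D' - 1) * exp (-D')" using elim(3) unfolding D'_def .
    also have "\<dots> \<le> (real k / D - 1) * exp (-D)"
      using h1 h2 elim(2) unfolding D'_def by (intro mult_mono) auto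
    also have "\<dots> \<le> real (Jw k) * exp (-D)"
      using Jw_ge[of k] unfolding D_def by (intro mult_right_mono) auto
    finally have "exp (-(real (Jw k) * exp (-D))) \<le> exp (-(2 * ln (real k)))" by simp
    also have "\<dots> = inverse (real k ^ 2)"
    proof -
      have "exp (2 * ln (real k)) = exp (ln (real k)) * exp (ln (real k))" by (simp only: mult_2 exp_add)
      also have "\<dots> = real k ^ 2" using elim(1) by (simp add: power2_eq_square)
      finally have e: "exp (2 * ln (real k)) = real k ^ 2" .
      have "exp (-(2 * ln (real k))) = inverse (exp (2 * ln (real k)))" by (rule exp_minus)
      also have "\<dots> = inverse (real k ^ 2)" by (simp only: e)
      finally show ?thesis .
    qed
    finally show ?case unfolding D_def .
  qed
qed




lemma mod_block: "(j * (L+1)) mod (L+1) = (0::nat)" by (metis mod_mult_self2_is_0)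
lemma mod_block_t: "t \<le> L \<Longrightarrow> (j * (L+1) + t) mod (L+1) = (t::nat)"
  by (metis Suc_eq_plus1 leD mod_less mod_mult_self3 not_less_eq)

context ppp_ctx begin

lemma site_struct:
  assumes om: "\<omega> \<in> space M" and s: "\<omega> \<in> site a L j" and L1: "1 \<le> L"
  defines "b \<equiv> a + real j * (2*L+5)"
  shows "N \<omega> \<inter> {b..<b+L+5} = {}"
    and "\<And>t. t \<in> {1..L} \<Longrightarrow> N \<omega> \<inter> {b+L+4+t..<b+L+5+t} \<noteq> {}"
    and "finite (N \<omega> \<inter> {b+L+5..b+L+6})"
proof -
  show fin: "finite (N \<omega> \<inter> {b+L+5..b+L+6})" using locfin[OF om] .
  have "j*(L+1) \<in> {j*(L+1)..<(j+1)*(L+1)}" by simp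
  then have "\<omega> \<in> ev a L (j*(L+1))" using s unfolding site_def by blast
  then have c: "card (N \<omega> \<inter> {b..<b+L+5}) = 0"
    unfolding ev_def blk_def hi_def lo_block mod_block b_def by (simp add: algebra_simps)
  have "finite (N \<omega> \<inter> {b..<b+L+5})"
    by (rule finite_subset[OF _ locfin[OF om, of b "b+L+5"]]) auto
  then show "N \<omega> \<inter> {b..<b+L+5} = {}" using c by simp
  fix t assume t: "t \<in> {1..L}"
  then have "j*(L+1)+t \<in> {j*(L+1)..<(j+1)*(L+1)}" by auto
  then have "\<omega> \<in> ev a L (j*(L+1)+t)" using s unfolding site_def by blast
  moreover have md: "(j*(L+1)+t) mod (L+1) = t" using t mod_block_t by auto
  moreover have lo_eq: "lo a L (j*(L+1)+t) = b+L+4+t" using lo_block_t[of t L a j] t unfolding b_def by simp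
  moreover have hi_eq: "hi a L (j*(L+1)+t) = b+L+5+t" unfolding hi_def using md lo_eq t by simp
  ultimately have "card (N \<omega> \<inter> {b+L+4+t..<b+L+5+t}) \<noteq> 0"
    using t unfolding ev_def blk_def by simp
  then show "N \<omega> \<inter> {b+L+4+t..<b+L+5+t} \<noteq> {}" by auto
qed


lemma aw_step: "k < k' \<Longrightarrow> aw k + real k \<le> aw k'"
proof -
  assume kk: "k < k'"
  have "aw k + real k \<le> aw (Suc k)" unfolding aw_def by (simp add: power2_eq_square algebra_simps)
  also have "\<dots> \<le> aw k'" unfolding aw_def using kk by (simp add: power_mono)
  finally show ?thesis .
qed

lemma construct:
  assumes cc: "chi_ctx ei es chi" and om: "\<omega> \<in> space M" and k0: "5 \<le> k0"
    and S: "\<And>k. k0 \<le> k \<Longrightarrow> \<exists>j<Jw k. \<omega> \<in> site (aw k) (Lw k) j"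
  shows "\<exists>xs :: nat \<Rightarrow> real.
            strict_mono xs \<and> filterlim xs at_top sequentially \<and>
            (\<forall>n\<ge>1. (\<forall>x\<in>{xs n - 2 * (1/16) * ln n .. xs n}. potential ei es chi (N \<omega>) x = ei) \<and>
                    (\<forall>x\<in>{xs n + 2 .. xs n + 2 * (1/16) * ln n - 2}. potential ei es chi (N \<omega>) x = es) \<and>
                    mono_on {xs n - 2 * (1/16) * ln n .. xs n + 2 * (1/16) * ln n - 2}
                            (potential ei es chi (N \<omega>))) \<and>
            1 \<le> liminf (\<lambda>n. ereal (xs n / real n)) \<and>
            limsup (\<lambda>n. ereal (xs n / real n)) \<le> 2"
proof -
  define jj where "jj k = (SOME j. j < Jw k \<and> \<omega> \<in> site (aw k) (Lw k) j)" for k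
  have jj: "jj k < Jw k \<and> \<omega> \<in> site (aw k) (Lw k) (jj k)" if "k0 \<le> k" for k
    unfolding jj_def using S[OF that] by (rule someI_ex)
  define bb where "bb k = aw k + real (jj k) * (2 * Lw k + 5)" for k
  define pp where "pp k = Min (N \<omega> \<inter> {bb k + Lw k + 5..<bb k + Lw k + 6})" for k
  define g where "g n = max k0 (floor_sqrt n)" for n
  define xs where "xs n = pp (g n) - 2 - 1 / (real n + 1)" for n
  have L1: "1 \<le> Lw k" for k unfolding Lw_def by simp
  have gk0: "k0 \<le> g n" for n unfolding g_def by simp
  have pp_loc: "bb k + Lw k + 5 \<le> pp k \<and> pp k < bb k + Lw k + 6" if "k0 \<le> k" for k
  proof -
    note ss = site_struct[OF om conjunct2[OF jj[OF that]] L1, folded bb_def]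
    have ne: "N \<omega> \<inter> {bb k + Lw k + 5..<bb k + Lw k + 6} \<noteq> {}"
      using ss(2)[of 1] L1[of k] by (simp add: algebra_simps)
    have fin: "finite (N \<omega> \<inter> {bb k + Lw k + 5..<bb k + Lw k + 6})"
      by (rule finite_subset[OF _ ss(3)]) auto
    show ?thesis using Min_in[OF fin ne] unfolding pp_def by auto
  qed
  have bb_loc: "aw k \<le> bb k \<and> bb k + 2 * Lw k + 5 \<le> aw k + k" if "k0 \<le> k" for k
  proof -
    have "real (jj k + 1) \<le> real (Jw k)" using jj[OF that] by simp
    then have "real (jj k + 1) * (2 * Lw k + 5) \<le> real (Jw k) * (2 * Lw k + 5)"
      by (intro mult_right_mono) auto
    then have "real (jj k + 1) * (2 * Lw k + 5) \<le> real k" using Jw_le[of k] by linarith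
    then show ?thesis unfolding bb_def by (simp add: algebra_simps)
  qed
  have xs_loc: "aw (g n) \<le> xs n \<and> xs n < aw (g n) + g n" for n
  proof -
    have h: "0 < 1 / (real n + 1)" "1 / (real n + 1) \<le> 1" by (auto simp: field_simps)
    show ?thesis using h pp_loc[OF gk0[of n]] bb_loc[OF gk0[of n]] unfolding xs_def by linarith
  qed
  have smono: "strict_mono xs"
  proof (rule strict_monoI_Suc)
    fix n
    have gm: "g n \<le> g (Suc n)" unfolding g_def using mono_floor_sqrt'[of n "Suc n"] by auto
    show "xs n < xs (Suc n)"
    proof (cases "g n = g (Suc n)")
      case True
      have "1 / (real (Suc n) + 1) < 1 / (real n + 1)" by (auto simp: field_simps)
      then show ?thesis unfolding xs_def True by simp
    next
      case False
      then have "g n < g (Suc n)" using gm by simp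
      then show ?thesis using aw_step[of "g n" "g (Suc n)"] xs_loc[of n] xs_loc[of "Suc n"] by simp
    qed
  qed
  have patt: "(\<forall>x\<in>{xs n - 2 * (1/16) * ln n .. xs n}. potential ei es chi (N \<omega>) x = ei) \<and>
              (\<forall>x\<in>{xs n + 2 .. xs n + 2 * (1/16) * ln n - 2}. potential ei es chi (N \<omega>) x = es) \<and>
              mono_on {xs n - 2 * (1/16) * ln n .. xs n + 2 * (1/16) * ln n - 2} (potential ei es chi (N \<omega>))"
    if n1: "1 \<le> n" for n
  proof -
    let ?k = "g n"
    note ss = site_struct[OF om conjunct2[OF jj[OF gk0[of n]]] L1, folded bb_def]
    have "n < (Suc (floor_sqrt n))^2" by (rule Suc_floor_sqrt_power2_gt)
    also have "\<dots> \<le> (Suc ?k)^2" unfolding g_def by (intro power_mono) auto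
    finally have "real n < (real ?k + 1)^2" by (metis of_nat_Suc of_nat_less_iff of_nat_power add.commute)
    then have "ln (real n) < ln ((real ?k + 1)^2)" using n1 by (intro ln_less_cancel_iff[THEN iffD2]) auto
    then have "ln (real n) < 2 * ln (real ?k + 1)" by (simp add: ln_realpow)
    then have lle: "2 * (1/16) * ln (real n) \<le> real (Lw ?k)" using Lw_ge[of ?k] by simp
    have l0: "0 \<le> 2 * (1/16) * ln (real n)" using n1 by simp
    have x1: "pp ?k - 3 \<le> xs n" "xs n \<le> pp ?k - 2"
    proof -
      have "0 < 1 / (real n + 1)" "1 / (real n + 1) \<le> 1" by (auto simp: field_simps)
      then show "pp ?k - 3 \<le> xs n" "xs n \<le> pp ?k - 2" unfolding xs_def by auto
    qed
    show ?thesis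
      by (rule chi_ctx.det[OF cc ss(3) L1 ss(1) ss(2) pp_def x1 l0 lle])
  qed
  have ev_ratio: "eventually (\<lambda>n. real n \<le> xs n \<and> xs n \<le> 2 * real n) sequentially"
  proof -
    have "eventually (\<lambda>n. k0^2 \<le> n) sequentially" by (rule eventually_ge_at_top)
    then show ?thesis
    proof eventually_elim
      case (elim n)
      have fs: "k0 \<le> floor_sqrt n" using elim by (rule le_floor_sqrtI)
      then have gn: "g n = floor_sqrt n" unfolding g_def by simp
      define k where "k = floor_sqrt n"
      have k5: "5 \<le> k" using fs k0 unfolding k_def by simp
      have "n < (Suc k)^2" unfolding k_def by (rule Suc_floor_sqrt_power2_gt)
      then have n1: "real n < (real k + 1)^2" by (metis of_nat_Suc of_nat_less_iff of_nat_power add.commute)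
      have n2: "real k ^ 2 \<le> real n" unfolding k_def
        by (metis floor_sqrt_power2_le of_nat_le_iff of_nat_power)
      have rk: "5 \<le> real k" using k5 by simp
      have "5 * real k \<le> real k * real k" using rk by (intro mult_right_mono) auto
      have e1: "(real k + 1)^2 = real k * real k + 2 * real k + 1" by (simp add: power2_eq_square algebra_simps)
      have e2: "aw k = 3 * (real k * real k) / 2" unfolding aw_def by (simp add: power2_eq_square)
      have e3: "real k ^ 2 = real k * real k" by (simp add: power2_eq_square)
      have "(real k + 1)^2 \<le> aw k" unfolding e1 e2 using \<open>5 * real k \<le> real k * real k\<close> rk by linarith
      moreover have "aw k + real k \<le> 2 * real k ^ 2" unfolding e2 e3 using \<open>5 * real k \<le> real k * real k\<close> rk
        by linarith
      moreover have xl: "aw k \<le> xs n" "xs n < aw k + real k" using xs_loc[of n] gn unfolding k_def by auto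
      ultimately show ?case using n1 n2 by linarith
    qed
  qed
  have flim: "filterlim xs at_top sequentially"
    by (rule filterlim_at_top_mono[OF filterlim_real_sequentially]) (use ev_ratio in \<open>auto elim: eventually_mono\<close>)
  have ev2: "eventually (\<lambda>n. 1 \<le> ereal (xs n / real n) \<and> ereal (xs n / real n) \<le> 2) sequentially"
    using ev_ratio eventually_gt_at_top[of 0]
  proof eventually_elim
    case (elim n)
    then have "real n > 0" by simp
    then show ?case using elim(1) by (auto simp: field_simps)
  qed
  have li: "1 \<le> liminf (\<lambda>n. ereal (xs n / real n))"
    by (rule Liminf_bounded) (use ev2 in \<open>auto elim: eventually_mono\<close>)
  have ls: "limsup (\<lambda>n. ereal (xs n / real n)) \<le> 2"
    by (rule Limsup_bounded) (use ev2 in \<open>auto elim: eventually_mono\<close>)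
  show ?thesis using smono flim patt li ls by blast
qed


lemma AE_sites: "AE \<omega> in M. \<exists>k1. \<forall>k\<ge>k1. \<exists>j<Jw k. \<omega> \<in> site (aw k) (Lw k) j"
proof -
  define F where "F k = space M - (\<Union>j<Jw k. site (aw k) (Lw k) j)" for k
  have Fs: "F k \<in> sets M" for k
    unfolding F_def by (intro sets.compl_sets sets.finite_UN) (simp_all add: site_events)
  have Ff: "emeasure M (F k) < \<infinity>" for k
    by (simp add: less_top[symmetric])
  have "eventually (\<lambda>k. norm (measure M (F k)) \<le> inverse (real k ^ 2)) sequentially"
    using key_bound
  proof eventually_elim
    case (elim k)
    have "measure M (F k) \<le> exp (-(real (Jw k) * exp (-(2 * real (Lw k) + 5))))"
      unfolding F_def by (rule fail_prob)
    then show ?case using elim by simp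
  qed
  then have sm: "summable (\<lambda>k. measure M (F k))"
    by (rule summable_comparison_test_ev) (rule inverse_power_summable, simp)
  have BC: "AE \<omega> in M. eventually (\<lambda>k. \<omega> \<in> space M - F k) sequentially"
    by (rule borel_cantelli_AE1[OF Fs Ff sm])
  show ?thesis
  proof (rule AE_mp[OF BC], rule AE_I2, rule impI)
    fix \<omega> assume om: "\<omega> \<in> space M" and ev: "eventually (\<lambda>k. \<omega> \<in> space M - F k) sequentially"
    then obtain k1 where k1: "\<And>k. k1 \<le> k \<Longrightarrow> \<omega> \<in> space M - F k"
      unfolding eventually_sequentially by blast
    show "\<exists>k1. \<forall>k\<ge>k1. \<exists>j<Jw k. \<omega> \<in> site (aw k) (Lw k) j"
    proof (rule exI[of _ k1], intro allI impI)
      fix k assume "k1 \<le> k"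
      then have "\<omega> \<in> (\<Union>j<Jw k. site (aw k) (Lw k) j)" using k1 om unfolding F_def by blast
      then show "\<exists>j<Jw k. \<omega> \<in> site (aw k) (Lw k) j" by blast
    qed
  qed
qed

end

theorem lemma5p3:
  fixes ei es :: real and chi :: "real \<Rightarrow> real"
    and M :: "'a measure" and N :: "'a \<Rightarrow> real set"
  assumes ei_pos: "0 < ei" and ei_es: "ei < es" and ratio: "es / ei > 2"
    and chi_cont: "continuous_on {0..} chi"
    and chi_range: "\<And>x. 0 \<le> x \<Longrightarrow> chi x \<in> {0..1}"
    and chi_antimono: "\<And>x y. 0 \<le> x \<Longrightarrow> x \<le> y \<Longrightarrow> chi y \<le> chi x"
    and chi_one: "\<And>x. 0 \<le> x \<Longrightarrow> x \<le> 1 \<Longrightarrow> chi x = 1"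
    and chi_zero: "\<And>x. 2 \<le> x \<Longrightarrow> chi x = 0"
    and ppp: "poisson_point_process M N"
  shows "\<exists>c0>0. AE \<omega> in M. \<exists>xs :: nat \<Rightarrow> real.
            strict_mono xs \<and> filterlim xs at_top sequentially \<and>
            (\<forall>n\<ge>1. (\<forall>x\<in>{xs n - 2 * c0 * ln n .. xs n}. potential ei es chi (N \<omega>) x = ei) \<and>
                    (\<forall>x\<in>{xs n + 2 .. xs n + 2 * c0 * ln n - 2}. potential ei es chi (N \<omega>) x = es) \<and>
                    mono_on {xs n - 2 * c0 * ln n .. xs n + 2 * c0 * ln n - 2}
                            (potential ei es chi (N \<omega>))) \<and>
            1 \<le> liminf (\<lambda>n. ereal (xs n / real n)) \<and>
            limsup (\<lambda>n. ereal (xs n / real n)) \<le> 2"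
proof -
  have ps: "prob_space M" using ppp unfolding poisson_point_process_def by (rule conjunct1)
  interpret P: ppp_ctx M N by (rule ppp_ctx.intro[OF ps]) (rule ppp_ctx_axioms.intro[OF ppp])
  have cc: "chi_ctx ei es chi"
    by (rule chi_ctx.intro) (fact ei_es, fact chi_range, fact chi_antimono, fact chi_one, fact chi_zero)
  have "AE \<omega> in M. \<exists>xs :: nat \<Rightarrow> real.
            strict_mono xs \<and> filterlim xs at_top sequentially \<and>
            (\<forall>n\<ge>1. (\<forall>x\<in>{xs n - 2 * (1/16) * ln n .. xs n}. potential ei es chi (N \<omega>) x = ei) \<and>
                    (\<forall>x\<in>{xs n + 2 .. xs n + 2 * (1/16) * ln n - 2}. potential ei es chi (N \<omega>) x = es) \<and>
                    mono_on {xs n - 2 * (1/16) * ln n .. xs n + 2 * (1/16) * ln n - 2}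
                            (potential ei es chi (N \<omega>))) \<and>
            1 \<le> liminf (\<lambda>n. ereal (xs n / real n)) \<and>
            limsup (\<lambda>n. ereal (xs n / real n)) \<le> 2"
  proof (rule AE_mp[OF P.AE_sites], rule AE_I2, rule impI)
    fix \<omega> assume om: "\<omega> \<in> space M" and ex: "\<exists>k1. \<forall>k\<ge>k1. \<exists>j<Jw k. \<omega> \<in> P.site (aw k) (Lw k) j"
    then obtain k1 where k1: "\<And>k. k1 \<le> k \<Longrightarrow> \<exists>j<Jw k. \<omega> \<in> P.site (aw k) (Lw k) j" by blast
    show "\<exists>xs :: nat \<Rightarrow> real.
            strict_mono xs \<and> filterlim xs at_top sequentially \<and>
            (\<forall>n\<ge>1. (\<forall>x\<in>{xs n - 2 * (1/16) * ln n .. xs n}. potential ei es chi (N \<omega>) x = ei) \<and>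
                    (\<forall>x\<in>{xs n + 2 .. xs n + 2 * (1/16) * ln n - 2}. potential ei es chi (N \<omega>) x = es) \<and>
                    mono_on {xs n - 2 * (1/16) * ln n .. xs n + 2 * (1/16) * ln n - 2}
                            (potential ei es chi (N \<omega>))) \<and>
            1 \<le> liminf (\<lambda>n. ereal (xs n / real n)) \<and>
            limsup (\<lambda>n. ereal (xs n / real n)) \<le> 2"
      by (rule P.construct[OF cc om, of "max k1 5"]) (auto intro: k1)
  qed
  then show ?thesis by (intro exI[of _ "1/16::real"] conjI) simp_all
qed


end
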